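(* Let $\{c_n\}_{n\ge1}$ be a real sequence, $\{d_{n+1}\}_{n\ge1}$ a positive chain sequence with minimal parameter sequence $\{\ell_{n+1}\}_{n\ge0}$, and let $P_0(x)=1$, $P_1(x)=x-c_1$, $P_{n+1}(x)=(x-c_{n+1})P_n(x)-d_{n+1}(x^2+1)P_{n-1}(x)$ for $n\ge1$. Let $\tau_0=1$, $\tau_n=\tau_{n-1}(1-ic_n)/(1+ic_n)$ for $n\ge1$, and let $\mu$ be the probability measure on the unit circle $\mathbb T$ whose Verblunsky coefficients are \[ \alpha_{n-1}=-\frac{1}{\tau_n}\,\frac{1-2\ell_{n+1}-ic_{n+1}}{1-ic_{n+1}},\qquad n\ge1 . \] For $k\ge1$ define, for $\zeta\ne1$ and $x=i(\zeta+1)/(\zeta-1)$ (equivalently $\zeta=(x+i)/(x-i)$), \[ \Phi_{k-1}(\zeta)=\frac{-i\,2^{k-1}}{\prod_{j=1}^k(1+ic_j)}\,\frac{1}{(x-i)^{k-1}}\Big[P_k(x)-(1-\ell_k)(x-i)P_{k-1}(x)\Big]. \] Then $\{\Phi_n\}_{n\ge0}$ are the monic orthogonal polynomials on the unit circle with respect to $\mu$, and they satisfy \[ \int_{\mathbb T}\overline{\Phi_m(\zeta)}\,\Phi_k(\zeta)\,d\mu(\zeta)=\frac{(1+c_1^2)\,2^{2k}\prod_{j=1}^{k+1}d_{j+1}}{\ell_{k+2}\prod_{j=1}^{k+1}(1+c_j^2)}\,\delta_{m,k},\qquad m,k\ge0 . \] Moreover, if $\{d_{n+1}\}_{n\ge1}$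 has multiple parameter sequences, then $\int_{\mathbb T}|\zeta-1|^{-2}\,d\mu(\zeta)$ is finite.
   Context: A sequence $\{d_{n+1}\}_{n\ge1}$ is a positive chain sequence if there is a parameter sequence $\{g_{n+1}\}_{n\ge0}$ with $0\le g_1<1$, $0<g_n<1$ for $n\ge2$, and $d_{n+1}=(1-g_n)g_{n+1}$ for $n\ge1$; the minimal parameter sequence $\{\ell_{n+1}\}_{n\ge0}$ is the one with $\ell_1=0$. The chain sequence has multiple parameter sequences if it admits more than one parameter sequence. For a nontrivial probability measure on $\mathbb T$ with monic orthogonal polynomials $\Phi_n$, the Verblunsky coefficients are $\alpha_n=-\overline{\Phi_{n+1}(0)}$, $n\ge0$. *)

theory Defs
  imports "HOL-Probability.Probability" "HOL-Computational_Algebra.Polynomial"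
begin

text \<open>Parameter sequences of a chain sequence. The chain sequence is indexed as in the paper:
  only the values d (n+1), n \<ge> 1, matter; a parameter sequence g is relevant at indices n \<ge> 1.\<close>
definition param_seq :: "(nat \<Rightarrow> real) \<Rightarrow> (nat \<Rightarrow> real) \<Rightarrow> bool" where
  "param_seq d g \<longleftrightarrow> 0 \<le> g 1 \<and> g 1 < 1 \<and> (\<forall>n\<ge>2. 0 < g n \<and> g n < 1)
     \<and> (\<forall>n\<ge>1. d (n+1) = (1 - g n) * g (n+1))"

definition positive_chain_seq :: "(nat \<Rightarrow> real) \<Rightarrow> bool" where
  "positive_chain_seq d \<longleftrightarrow> (\<exists>g. param_seq d g)"

definition minimal_param_seq :: "(nat \<Rightarrow> real) \<Rightarrow> (nat \<Rightarrow> real) \<Rightarrow> bool" where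
  "minimal_param_seq d l \<longleftrightarrow> param_seq d l \<and> l 1 = 0"

definition multiple_param_seqs :: "(nat \<Rightarrow> real) \<Rightarrow> bool" where
  "multiple_param_seqs d \<longleftrightarrow>
     (\<exists>g h. param_seq d g \<and> param_seq d h \<and> (\<exists>n\<ge>1. g n \<noteq> h n))"

fun Pn :: "(nat \<Rightarrow> real) \<Rightarrow> (nat \<Rightarrow> real) \<Rightarrow> nat \<Rightarrow> complex \<Rightarrow> complex" where
  "Pn c d 0 x = 1"
| "Pn c d (Suc 0) x = x - of_real (c 1)"
| "Pn c d (Suc (Suc n)) x =
     (x - of_real (c (n+2))) * Pn c d (Suc n) x - of_real (d (n+2)) * (x^2 + 1) * Pn c d n x"

fun tau :: "(nat \<Rightarrow> real) \<Rightarrow> nat \<Rightarrow> complex" where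
  "tau c 0 = 1"
| "tau c (Suc n) = tau c n * (1 - \<i> * of_real (c (n+1))) / (1 + \<i> * of_real (c (n+1)))"

definition nontrivial_prob_on_circle :: "complex measure \<Rightarrow> bool" where
  "nontrivial_prob_on_circle \<mu> \<longleftrightarrow> prob_space \<mu> \<and> sets \<mu> = sets borel
     \<and> emeasure \<mu> (- sphere 0 1) = 0 \<and> (\<forall>F. finite F \<longrightarrow> emeasure \<mu> (- F) > 0)"

definition monic_OP :: "complex measure \<Rightarrow> nat \<Rightarrow> complex poly \<Rightarrow> bool" where
  "monic_OP \<mu> n p \<longleftrightarrow> degree p = n \<and> lead_coeff p = 1 \<and>
     (\<forall>j<n. integral\<^sup>L \<mu> (\<lambda>z. cnj (z ^ j) * poly p z) = 0)"

definition monic_OPs :: "complex measure \<Rightarrow> (nat \<Rightarrow> complex poly) \<Rightarrow> bool" where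
  "monic_OPs \<mu> \<Phi> \<longleftrightarrow> (\<forall>n. monic_OP \<mu> n (\<Phi> n))"

definition verblunsky :: "complex measure \<Rightarrow> nat \<Rightarrow> complex" where
  "verblunsky \<mu> n = - cnj (poly (THE p. monic_OP \<mu> (Suc n) p) 0)"

end

theory Submission
  imports Defs
begin


locale circ =
  fixes M :: "complex measure"
  assumes nt: "nontrivial_prob_on_circle M"
begin

lemma prob: "prob_space M" and sets_M: "sets M = sets borel"
  and out0: "emeasure M (- sphere 0 1) = 0"
  and nontriv: "\<And>F. finite F \<Longrightarrow> emeasure M (- F) > 0"
  using nt unfolding nontrivial_prob_on_circle_def by auto

interpretation P: prob_space M by (rule prob)

lemma AE_circ: "AE z in M. cmod z = 1"
proof -
  have "- sphere 0 1 \<in> sets M" using sets_M by simp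
  then have "AE z in M. z \<notin> - sphere (0::complex) 1"
    using out0 by (intro AE_I'[of "- sphere 0 1"]) auto
  then show ?thesis by eventually_elim auto
qed

lemma meas: "continuous_on UNIV f \<Longrightarrow> f \<in> borel_measurable M"
  using measurable_cong_sets[OF sets_M refl] borel_measurable_continuous_onI
  by metis

lemma integ:
  fixes f :: "complex \<Rightarrow> 'b::{banach, second_countable_topology}"
  assumes "continuous_on UNIV f" shows "integrable M f"
proof -
  have "compact (f ` sphere 0 1)"
    using assms by (intro compact_continuous_image) (auto intro: continuous_on_subset)
  then obtain B where B0: "\<forall>z\<in>sphere 0 1. norm (f z) \<le> B"
    using compact_imp_bounded[of "f ` sphere 0 1"] unfolding bounded_iff by auto
  then have B: "\<And>z. z \<in> sphere 0 1 \<Longrightarrow> norm (f z) \<le> B" by blast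
  have "AE z in M. norm (f z) \<le> B"
    using AE_circ by eventually_elim (auto intro!: B)
  then show ?thesis using meas[OF assms] by (intro P.integrable_const_bound) auto
qed


definition ip :: "complex poly \<Rightarrow> complex poly \<Rightarrow> complex" where
  "ip p q = integral\<^sup>L M (\<lambda>z. cnj (poly p z) * poly q z)"

lemma space_M: "space M = UNIV"
  using sets_eq_imp_space_eq[OF sets_M] by simp

lemma poly_sum_le: fixes p :: "complex poly" assumes "degree p \<le> n" shows "poly p z = (\<Sum>k\<le>n. coeff p k * z^k)"
proof -
  have "poly p z = (\<Sum>i\<le>degree p. coeff p i * z^i)" by (rule poly_altdef)
  also have "\<dots> = (\<Sum>k\<le>n. coeff p k * z^k)"
    by (rule sum.mono_neutral_left) (use assms in \<open>auto simp: coeff_eq_0\<close>)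
  finally show ?thesis .
qed

lemma ip_expand: "degree r \<le> n \<Longrightarrow>
   ip r q = (\<Sum>j\<le>n. cnj (coeff r j) * integral\<^sup>L M (\<lambda>z. cnj (z^j) * poly q z))"
proof -
  assume "degree r \<le> n"
  then have "ip r q = integral\<^sup>L M (\<lambda>z. (\<Sum>j\<le>n. cnj (coeff r j) * (cnj (z^j) * poly q z)))"
    unfolding ip_def by (subst poly_sum_le[of r n]) (auto simp: sum_distrib_right mult.assoc)
  also have "\<dots> = (\<Sum>j\<le>n. integral\<^sup>L M (\<lambda>z. cnj (coeff r j) * (cnj (z^j) * poly q z)))"
    by (rule Bochner_Integration.integral_sum) (intro integ continuous_intros)
  also have "\<dots> = (\<Sum>j\<le>n. cnj (coeff r j) * integral\<^sup>L M (\<lambda>z. cnj (z^j) * poly q z))"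
    by simp
  finally show ?thesis .
qed

lemma OP_orth: "monic_OP M n p \<Longrightarrow> degree r < n \<Longrightarrow> ip r p = 0"
  by (subst ip_expand[of r "degree r"]) (auto simp: monic_OP_def)

lemma ip_self: "ip p p = of_real (integral\<^sup>L M (\<lambda>z. (cmod (poly p z))^2))"
proof -
  have "ip p p = integral\<^sup>L M (\<lambda>z. of_real ((cmod (poly p z))^2))"
    unfolding ip_def
  proof (intro Bochner_Integration.integral_cong refl)
    fix z show "cnj (poly p z) * poly p z = complex_of_real ((cmod (poly p z))\<^sup>2)"
      using complex_norm_square[of "poly p z"] by (simp add: mult.commute)
  qed
  also have "\<dots> = of_real (integral\<^sup>L M (\<lambda>z. (cmod (poly p z))^2))"
    by (rule integral_complex_of_real)
  finally show ?thesis .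
qed

lemma ip_pos: assumes "p \<noteq> 0" shows "integral\<^sup>L M (\<lambda>z. (cmod (poly p z))^2) > 0"
proof -
  let ?f = "\<lambda>z. (cmod (poly p z))^2"
  have int: "integrable M ?f" by (intro integ continuous_intros)
  have nn: "integral\<^sup>L M ?f \<ge> 0" by (intro Bochner_Integration.integral_nonneg) auto
  have "integral\<^sup>L M ?f \<noteq> 0"
  proof
    assume "integral\<^sup>L M ?f = 0"
    then have "AE z in M. ?f z = 0" using integral_nonneg_eq_0_iff_AE[OF int] by auto
    then have "AE z in M. z \<in> {x. poly p x = 0}" by eventually_elim auto
    then obtain N where N: "{z \<in> space M. z \<notin> {x. poly p x = 0}} \<subseteq> N" "N \<in> null_sets M"
      by (auto elim!: AE_E)
    have fin: "finite {x. poly p x = 0}" using poly_roots_finite[OF assms] .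
    have "emeasure M (- {x. poly p x = 0}) \<le> emeasure M N"
      using N by (intro emeasure_mono) (auto simp: space_M)
    also have "\<dots> = 0" using N by auto
    finally show False using nontriv[OF fin] by simp
  qed
  with nn show ?thesis by linarith
qed


lemma ip_diff2: "ip r (p - q) = ip r p - ip r q"
  unfolding ip_def by (simp add: ring_distribs, rule Bochner_Integration.integral_diff; intro integ continuous_intros)

lemma monic_ne0: "monic_OP M n p \<Longrightarrow> p \<noteq> 0"
  by (auto simp: monic_OP_def)

lemma OP_top: assumes "monic_OP M n p"
  shows "integral\<^sup>L M (\<lambda>z. cnj (z^n) * poly p z) = ip p p"
proof -
  have dp: "degree p = n" and lc: "coeff p n = 1" using assms by (auto simp: monic_OP_def)
  have "ip p p = (\<Sum>j\<le>n. cnj (coeff p j) * integral\<^sup>L M (\<lambda>z. cnj (z^j) * poly p z))"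
    by (rule ip_expand) (simp add: dp)
  also have "\<dots> = (\<Sum>j\<le>n. if j = n then integral\<^sup>L M (\<lambda>z. cnj (z^n) * poly p z) else 0)"
    using assms lc by (intro sum.cong refl) (auto simp: monic_OP_def)
  also have "\<dots> = integral\<^sup>L M (\<lambda>z. cnj (z^n) * poly p z)" by simp
  finally show ?thesis by simp
qed

lemma ip_self_pos: "p \<noteq> 0 \<Longrightarrow> ip p p \<noteq> 0"
  using ip_pos[of p] ip_self[of p] by auto

lemma OP_unique: assumes p: "monic_OP M n p" and q: "monic_OP M n q" shows "p = q"
proof (rule ccontr)
  assume ne: "p \<noteq> q"
  let ?r = "p - q"
  have r0: "?r \<noteq> 0" using ne by simp
  have c: "\<forall>i\<ge>n. coeff ?r i = 0"
    using p q by (auto simp: monic_OP_def coeff_eq_0 le_less)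
  have "n \<noteq> 0"
  proof
    assume "n = 0" then have "\<forall>i. coeff ?r i = 0" using c by auto
    then show False using r0 by (simp add: poly_eq_iff)
  qed
  have "degree ?r \<le> n - 1" by (rule degree_le) (use c \<open>n \<noteq> 0\<close> in auto)
  then have "degree ?r < n" using \<open>n \<noteq> 0\<close> by linarith
  then have "ip ?r ?r = 0" using OP_orth[OF p] OP_orth[OF q] by (simp add: ip_diff2)
  with ip_self_pos[OF r0] show False by simp
qed

definition rev :: "nat \<Rightarrow> complex poly \<Rightarrow> complex poly" where
  "rev n p = (\<Sum>i\<le>n. monom (cnj (coeff p (n - i))) i)"

lemma coeff_rev: "coeff (rev n p) i = (if i \<le> n then cnj (coeff p (n - i)) else 0)"
  unfolding rev_def by (simp add: coeff_sum coeff_monom)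

lemma degree_rev: "degree (rev n p) \<le> n"
  by (rule degree_le) (simp add: coeff_rev)

lemma poly_rev: "poly (rev n p) z = (\<Sum>i\<le>n. cnj (coeff p (n-i)) * z^i)"
  by (simp add: rev_def poly_sum poly_monom)

lemma circ_inv: "cmod z = 1 \<Longrightarrow> cnj z * z = 1"
  using complex_norm_square[of z] by (simp add: mult.commute)

lemma circ_pow: assumes "cmod z = 1" "j \<le> n" shows "cnj (z^j) * z^n = z^(n-j)"
proof -
  have "z^n = z^j * z^(n-j)" using assms(2) by (simp add: power_add[symmetric])
  then have "cnj (z^j) * z^n = (cnj z * z)^j * z^(n-j)" by (simp add: power_mult_distrib)
  then show ?thesis using circ_inv[OF assms(1)] by simp
qed

lemma poly_rev_circ: assumes z: "cmod z = 1" and d: "degree p \<le> n"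
  shows "poly (rev n p) z = z^n * cnj (poly p z)"
proof -
  have "poly (rev n p) z = (\<Sum>i=0..n. cnj (coeff p (n-i)) * z^i)"
    by (simp add: poly_rev atMost_atLeast0)
  also have "\<dots> = (\<Sum>k=0..n. cnj (coeff p k) * z^(n-k))"
    by (subst sum.atLeastAtMost_rev) (intro sum.cong refl, simp)
  also have "\<dots> = (\<Sum>k\<le>n. cnj (coeff p k) * (cnj (z^k) * z^n))"
    using circ_pow[OF z] by (simp add: atMost_atLeast0)
  also have "\<dots> = z^n * cnj (poly p z)"
    by (simp add: poly_sum_le[OF d] sum_distrib_left mult_ac)
  finally show ?thesis .
qed

lemma int_circ:
  fixes f g :: "complex \<Rightarrow> complex"
  assumes "\<And>z. cmod z = 1 \<Longrightarrow> f z = g z" "continuous_on UNIV f" "continuous_on UNIV g"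
  shows "integral\<^sup>L M f = integral\<^sup>L M g"
  using assms(1) AE_circ
  by (intro integral_cong_AE meas assms(2,3)) (auto elim: AE_mp)

lemma int_cnj: "continuous_on UNIV f \<Longrightarrow> integral\<^sup>L M (\<lambda>z. cnj (f z)) = cnj (integral\<^sup>L M f)"
  by (rule integral_bounded_linear[OF bounded_linear_cnj integ])

lemma int_rev: assumes "degree p \<le> n" "j \<le> n"
  shows "integral\<^sup>L M (\<lambda>z. cnj (z^j) * poly (rev n p) z)
       = cnj (integral\<^sup>L M (\<lambda>z. cnj (z^(n-j)) * poly p z))"
proof -
  have "integral\<^sup>L M (\<lambda>z. cnj (z^j) * poly (rev n p) z)
      = integral\<^sup>L M (\<lambda>z. cnj (cnj (z^(n-j)) * poly p z))"
  proof (rule int_circ)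
    fix z :: complex assume z: "cmod z = 1"
    show "cnj (z^j) * poly (rev n p) z = cnj (cnj (z^(n-j)) * poly p z)"
      using poly_rev_circ[OF z assms(1)] circ_pow[OF z assms(2)]
      by (simp add: mult.assoc[symmetric])
  qed (intro continuous_intros)+
  also have "\<dots> = cnj (integral\<^sup>L M (\<lambda>z. cnj (z^(n-j)) * poly p z))"
    by (rule int_cnj) (intro continuous_intros)
  finally show ?thesis .
qed

lemma int_shift: assumes "Suc j' = j" and that: "continuous_on UNIV f"
  shows "integral\<^sup>L M (\<lambda>z. cnj (z^j) * (z * f z)) = integral\<^sup>L M (\<lambda>z. cnj (z^j') * f z)"
proof (rule int_circ)
  fix z :: complex assume z: "cmod z = 1"
  show "cnj (z^j) * (z * f z) = cnj (z^j') * f z"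
  proof -
    have "cnj (z^j) * (z * f z) = (cnj z * z) * cnj (z^j') * f z"
      by (simp add: assms(1)[symmetric] mult_ac)
    then show ?thesis using circ_inv[OF z] by simp
  qed
qed (auto intro!: continuous_intros that)

end


context circ begin

lemma OP_step: assumes p: "monic_OP M n p"
  shows "monic_OP M (Suc n)
     (pCons 0 p - smult (integral\<^sup>L M (\<lambda>z. z * poly p z) / integral\<^sup>L M (\<lambda>z. poly (rev n p) z)) (rev n p))"
    (is "monic_OP M (Suc n) ?q")
proof -
  define g where "g = integral\<^sup>L M (\<lambda>z. z * poly p z) / integral\<^sup>L M (\<lambda>z. poly (rev n p) z)"
  have dp: "degree p = n" and lc: "coeff p n = 1"
    and orth: "\<And>j. j < n \<Longrightarrow> integral\<^sup>L M (\<lambda>z. cnj (z ^ j) * poly p z) = 0"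
    using p by (auto simp: monic_OP_def)
  have p0: "p \<noteq> 0" using monic_ne0[OF p] .
  have R: "integral\<^sup>L M (\<lambda>z. poly (rev n p) z) = cnj (ip p p)"
    using int_rev[of p n 0] OP_top[OF p] dp by simp
  have R0: "integral\<^sup>L M (\<lambda>z. poly (rev n p) z) \<noteq> 0"
    using R ip_self_pos[OF p0] by simp
  have cq: "coeff ?q (Suc n) = 1" using lc by (simp add: coeff_rev)
  have cq2: "\<forall>i>Suc n. coeff ?q i = 0" using dp by (auto simp: coeff_rev coeff_eq_0)
  have dq: "degree ?q = Suc n"
    using cq cq2 by (intro antisym degree_le le_degree) auto
  have "integral\<^sup>L M (\<lambda>z. cnj (z ^ j) * poly ?q z) = 0" if j: "j < Suc n" for j
  proof -
    have "integral\<^sup>L M (\<lambda>z. cnj (z ^ j) * poly ?q z)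
        = integral\<^sup>L M (\<lambda>z. cnj (z ^ j) * (z * poly p z)) - g * integral\<^sup>L M (\<lambda>z. cnj (z ^ j) * poly (rev n p) z)"
      unfolding g_def[symmetric]
      by (simp add: ring_distribs, subst Bochner_Integration.integral_diff)
         (auto intro!: integ continuous_intros simp: mult_ac)
    also have "\<dots> = 0"
    proof (cases j)
      case 0
      then show ?thesis using R0 by (simp add: g_def)
    next
      case (Suc j')
      have a: "integral\<^sup>L M (\<lambda>z. cnj (z ^ j) * (z * poly p z)) = 0"
        using int_shift[of j' j "poly p", OF _ continuous_on_poly[OF continuous_on_id]] orth[of j'] Suc j by auto
      have b: "integral\<^sup>L M (\<lambda>z. cnj (z ^ j) * poly (rev n p) z) = 0"
        using int_rev[of p n j] orth[of "n - j"] Suc j dp by auto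
      show ?thesis using a b by simp
    qed
    finally show ?thesis .
  qed
  then show ?thesis using dq cq by (simp add: monic_OP_def)
qed

definition Phi where "Phi n = (THE p. monic_OP M n p)"

lemma OP_0: "monic_OP M 0 1" by (simp add: monic_OP_def)

lemma Phi_OP: "monic_OP M n (Phi n)"
proof (induction n)
  case 0 show ?case unfolding Phi_def using OP_0 OP_unique by (metis theI)
next
  case (Suc n)
  from OP_step[OF Suc] show ?case unfolding Phi_def using OP_unique by (metis theI)
qed

lemma Phi_eq: "monic_OP M n p \<Longrightarrow> Phi n = p"
  using OP_unique Phi_OP by blast

lemma Phi_0: "Phi 0 = 1" using Phi_eq OP_0 by blast

lemma degree_Phi: "degree (Phi n) = n" and coeff_Phi: "coeff (Phi n) n = 1"
  using Phi_OP[of n] by (auto simp: monic_OP_def)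

lemma verb_Phi: "verblunsky M n = - cnj (coeff (Phi (Suc n)) 0)"
  unfolding verblunsky_def Phi_def[symmetric] by (simp add: poly_0_coeff_0)

lemma szego: "Phi (Suc n) = pCons 0 (Phi n) - smult (cnj (verblunsky M n)) (rev n (Phi n))"
proof -
  let ?g = "integral\<^sup>L M (\<lambda>z. z * poly (Phi n) z) / integral\<^sup>L M (\<lambda>z. poly (rev n (Phi n)) z)"
  have e: "Phi (Suc n) = pCons 0 (Phi n) - smult ?g (rev n (Phi n))"
    by (rule Phi_eq[OF OP_step[OF Phi_OP]])
  have "coeff (Phi (Suc n)) 0 = - ?g"
    by (subst e) (simp add: coeff_rev coeff_Phi)
  then have "cnj (verblunsky M n) = ?g" by (simp add: verb_Phi)
  with e show ?thesis by simp
qed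


definition N where "N n = ip (Phi n) (Phi n)"

lemma N_real: "N n = of_real (integral\<^sup>L M (\<lambda>z. (cmod (poly (Phi n) z))^2))"
  unfolding N_def by (rule ip_self)

lemma N_pos: "Re (N n) > 0" "cnj (N n) = N n"
  using N_real[of n] ip_pos[OF monic_ne0[OF Phi_OP[of n]]] by auto

lemma ip_cnj: "ip p q = cnj (ip q p)"
proof -
  have "ip q p = integral\<^sup>L M (\<lambda>z. cnj (cnj (poly p z) * poly q z))"
    unfolding ip_def by (simp add: mult.commute)
  also have "\<dots> = cnj (ip p q)" unfolding ip_def by (rule int_cnj) (intro continuous_intros)
  finally show ?thesis by simp
qed

lemma ip_Phi: "ip (Phi m) (Phi k) = (if m = k then N k else 0)"
proof -
  consider "m < k" | "m = k" | "k < m" by linarith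
  then show ?thesis
  proof cases
    case 1 then show ?thesis using OP_orth[OF Phi_OP, of "Phi m" k] by (simp add: degree_Phi)
  next
    case 2 then show ?thesis by (simp add: N_def)
  next
    case 3 then show ?thesis using OP_orth[OF Phi_OP, of "Phi k" m] ip_cnj[of "Phi m" "Phi k"]
      by (simp add: degree_Phi)
  qed
qed

lemma top_Phi: "integral\<^sup>L M (\<lambda>z. cnj (z^n) * poly (Phi n) z) = N n"
  using OP_top[OF Phi_OP] by (simp add: N_def)

lemma int_R: "integral\<^sup>L M (\<lambda>z. poly (rev n (Phi n)) z) = N n"
  using int_rev[of "Phi n" n 0] top_Phi[of n] N_pos(2)[of n] by (simp add: degree_Phi)

lemma int_Phi_0: assumes "n > 0" shows "integral\<^sup>L M (\<lambda>z. poly (Phi n) z) = 0"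
proof -
  have "integral\<^sup>L M (\<lambda>z. cnj (z^0) * poly (Phi n) z) = 0"
    using Phi_OP[of n] assms unfolding monic_OP_def by blast
  then show ?thesis by simp
qed

lemma poly_szego: "poly (Phi (Suc n)) z = z * poly (Phi n) z - cnj (verblunsky M n) * poly (rev n (Phi n)) z"
  by (subst szego) simp

lemma Z_eq: "integral\<^sup>L M (\<lambda>z. z * poly (Phi n) z) = cnj (verblunsky M n) * N n"
proof -
  have "0 = integral\<^sup>L M (\<lambda>z. poly (Phi (Suc n)) z)" using int_Phi_0[of "Suc n"] by simp
  also have "\<dots> = integral\<^sup>L M (\<lambda>z. z * poly (Phi n) z) - cnj (verblunsky M n) * N n"
    unfolding poly_szego
    by (subst Bochner_Integration.integral_diff) (auto intro!: integ continuous_intros simp: int_R)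
  finally show ?thesis by simp
qed

lemma int_rev_top: assumes "degree p \<le> n"
  shows "integral\<^sup>L M (\<lambda>z. cnj (z^(Suc n)) * poly (rev n p) z) = cnj (integral\<^sup>L M (\<lambda>z. z * poly p z))"
proof -
  have "integral\<^sup>L M (\<lambda>z. cnj (z^(Suc n)) * poly (rev n p) z) = integral\<^sup>L M (\<lambda>z. cnj (z * poly p z))"
  proof (rule int_circ)
    fix z :: complex assume z: "cmod z = 1"
    have "cnj (z^(Suc n)) * (z^n * cnj (poly p z)) = (cnj (z^n) * z^n) * cnj (z * poly p z)"
      by (simp add: mult_ac)
    then show "cnj (z^(Suc n)) * poly (rev n p) z = cnj (z * poly p z)"
      using poly_rev_circ[OF z assms] circ_pow[OF z, of n n] by simp
  qed (intro continuous_intros)+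
  also have "\<dots> = cnj (integral\<^sup>L M (\<lambda>z. z * poly p z))"
    by (rule int_cnj) (intro continuous_intros)
  finally show ?thesis .
qed

lemma N_Suc: "N (Suc n) = (1 - (cmod (verblunsky M n))^2) * N n"
proof -
  let ?a = "verblunsky M n"
  have "N (Suc n) = integral\<^sup>L M (\<lambda>z. cnj (z^(Suc n)) * poly (Phi (Suc n)) z)"
    by (rule top_Phi[symmetric])
  also have "\<dots> = integral\<^sup>L M (\<lambda>z. cnj (z^(Suc n)) * (z * poly (Phi n) z))
       - cnj ?a * integral\<^sup>L M (\<lambda>z. cnj (z^(Suc n)) * poly (rev n (Phi n)) z)"
  proof -
    have "integral\<^sup>L M (\<lambda>z. cnj (z^(Suc n)) * poly (Phi (Suc n)) z) = integral\<^sup>L M (\<lambda>z.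
       cnj (z^(Suc n)) * (z * poly (Phi n) z) - cnj ?a * (cnj (z^(Suc n)) * poly (rev n (Phi n)) z))"
      by (intro Bochner_Integration.integral_cong refl) (simp add: poly_szego algebra_simps)
    also have "\<dots> = integral\<^sup>L M (\<lambda>z. cnj (z^(Suc n)) * (z * poly (Phi n) z))
       - integral\<^sup>L M (\<lambda>z. cnj ?a * (cnj (z^(Suc n)) * poly (rev n (Phi n)) z))"
      by (rule Bochner_Integration.integral_diff) (intro integ continuous_intros)+
    finally show ?thesis by (simp only: integral_mult_right_zero)
  qed
  also have "integral\<^sup>L M (\<lambda>z. cnj (z^(Suc n)) * (z * poly (Phi n) z)) = N n"
    using int_shift[of n "Suc n" "poly (Phi n)", OF _ continuous_on_poly[OF continuous_on_id]] top_Phi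
    by simp
  also have "integral\<^sup>L M (\<lambda>z. cnj (z^(Suc n)) * poly (rev n (Phi n)) z) = ?a * N n"
    using int_rev_top[of "Phi n" n] Z_eq[of n] N_pos(2)[of n] by (simp add: degree_Phi)
  finally have "N (Suc n) = N n - cnj ?a * ?a * N n" by (simp add: mult_ac)
  also have "cnj ?a * ?a = of_real ((cmod ?a)^2)" using complex_norm_square[of ?a] by (simp add: mult.commute)
  finally show ?thesis by (simp add: algebra_simps)
qed


lemma rev_szego: assumes "degree p \<le> m"
  shows "rev (Suc m) (pCons 0 p - smult g (rev m p)) = rev m p - smult (cnj g) (pCons 0 p)"
proof (rule poly_eqI)
  fix i
  show "coeff (rev (Suc m) (pCons 0 p - smult g (rev m p))) i = coeff (rev m p - smult (cnj g) (pCons 0 p)) i"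
  proof (cases "i \<le> m")
    case True
    then show ?thesis
      by (cases i) (auto simp: coeff_rev coeff_pCons Suc_diff_le split: nat.split intro!: arg_cong[where f="coeff p"])
  next
    case False
    then consider "i = Suc m" | "i > Suc m" by linarith
    then show ?thesis using assms
      by cases (auto simp: coeff_rev coeff_pCons coeff_eq_0 split: nat.split)
  qed
qed

lemma poly_rev_szego: "poly (rev (Suc n) (Phi (Suc n))) z
   = poly (rev n (Phi n)) z - verblunsky M n * z * poly (Phi n) z"
  by (subst szego, subst rev_szego) (auto simp: degree_Phi)

end



lemma ic_ne: "1 + \<i> * complex_of_real c \<noteq> 0" "1 - \<i> * complex_of_real c \<noteq> 0"
  by (auto simp: complex_eq_iff)

lemma stepA0:
  fixes x pa pb aa bb E T u :: complex and la lb :: real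
  assumes "aa \<noteq> 0" "bb \<noteq> 0" "x - \<i> \<noteq> 0" "E \<noteq> 0" "u \<noteq> 0"
  shows "((x+\<i>)/(x-\<i>)) * ((-\<i>*T/aa) * (1/E) * (pb - of_real (1-la)*(x-\<i>)*pa))
     - (-(bb/aa) * ((u - 2 * of_real lb)/u))
        * ((\<i>*T/bb) * (1/E) * (pb - of_real (1-la)*(x+\<i>)*pa))
   = (-\<i>*(T*2)/(aa * u)) * (1/(E*(x-\<i>)))
       * (((x + \<i>*(u-1))*pb - of_real ((1-la)*lb)*(x^2+1)*pa) - of_real (1-lb)*(x-\<i>)*pb)"
  using assms
  by (simp add: field_simps) (simp add: algebra_simps power2_eq_square)

lemma stepA:
  fixes x pa pb aa bb E T :: complex and la lb cb :: real
  assumes "aa \<noteq> 0" "bb \<noteq> 0" "x - \<i> \<noteq> 0" "E \<noteq> 0"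
  shows "((x+\<i>)/(x-\<i>)) * ((-\<i>*T/aa) * (1/E) * (pb - of_real (1-la)*(x-\<i>)*pa))
     - (-(bb/aa) * ((1 - 2 * of_real lb + \<i> * of_real cb)/(1 + \<i> * of_real cb)))
        * ((\<i>*T/bb) * (1/E) * (pb - of_real (1-la)*(x+\<i>)*pa))
   = (-\<i>*(T*2)/(aa*(1+\<i> * of_real cb))) * (1/(E*(x-\<i>)))
       * (((x - of_real cb)*pb - of_real ((1-la)*lb)*(x^2+1)*pa) - of_real (1-lb)*(x-\<i>)*pb)"
proof -
  have e1: "1 - 2 * of_real lb + \<i> * of_real cb = (1 + \<i> * of_real cb) - 2 * complex_of_real lb" by simp
  have e2: "x - of_real cb = x + \<i>*((1 + \<i> * of_real cb) - 1)" by (simp add: algebra_simps)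
  show ?thesis unfolding e1 e2 by (rule stepA0[OF assms ic_ne(1)])
qed

lemma stepB0:
  fixes x pa pb aa bb E T v :: complex and la lb :: real
  assumes "aa \<noteq> 0" "bb \<noteq> 0" "x - \<i> \<noteq> 0" "E \<noteq> 0" "v \<noteq> 0"
  shows "((\<i>*T/bb) * (1/E) * (pb - of_real (1-la)*(x+\<i>)*pa))
     - (-(aa/bb) * ((v - 2 * of_real lb)/v)) * ((x+\<i>)/(x-\<i>))
        * ((-\<i>*T/aa) * (1/E) * (pb - of_real (1-la)*(x-\<i>)*pa))
   = (\<i>*(T*2)/(bb * v)) * (1/(E*(x-\<i>)))
       * (((x + \<i>*(1-v))*pb - of_real ((1-la)*lb)*(x^2+1)*pa) - of_real (1-lb)*(x+\<i>)*pb)"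
  using assms
  by (simp add: field_simps) (simp add: algebra_simps power2_eq_square)

lemma stepB:
  fixes x pa pb aa bb E T :: complex and la lb cb :: real
  assumes "aa \<noteq> 0" "bb \<noteq> 0" "x - \<i> \<noteq> 0" "E \<noteq> 0"
  shows "((\<i>*T/bb) * (1/E) * (pb - of_real (1-la)*(x+\<i>)*pa))
     - (-(aa/bb) * ((1 - 2 * of_real lb - \<i> * of_real cb)/(1 - \<i> * of_real cb))) * ((x+\<i>)/(x-\<i>))
        * ((-\<i>*T/aa) * (1/E) * (pb - of_real (1-la)*(x-\<i>)*pa))
   = (\<i>*(T*2)/(bb*(1-\<i> * of_real cb))) * (1/(E*(x-\<i>)))
       * (((x - of_real cb)*pb - of_real ((1-la)*lb)*(x^2+1)*pa) - of_real (1-lb)*(x+\<i>)*pb)"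
proof -
  have e1: "1 - 2 * of_real lb - \<i> * of_real cb = (1 - \<i> * of_real cb) - 2 * complex_of_real lb" by simp
  have e2: "x - of_real cb = x + \<i>*(1 - (1 - \<i> * of_real cb))" by (simp add: algebra_simps)
  show ?thesis unfolding e1 e2 by (rule stepB0[OF assms ic_ne(2)])
qed

lemma ratio_aux: fixes X E D C lb lc w :: real
  assumes "C > 0" "lb > 0" "lc > 0" "w > 0"
  shows "X*(E*4)*(D*((1-lb)*lc))/(lc*(C*w)) = (4*lb*(1-lb)/w)*(X*E*D/(lb*C))"
  using assms by (simp add: field_simps)

locale setting = circ +
  fixes c d l :: "nat \<Rightarrow> real"
  assumes minl: "minimal_param_seq d l"
    and verb: "\<And>n. n \<ge> 1 \<Longrightarrow> verblunsky M (n - 1) =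
        - (1 / tau c n) * ((1 - 2 * of_real (l (n+1)) - \<i> * of_real (c (n+1)))
                          / (1 - \<i> * of_real (c (n+1))))"
begin

lemma l1: "l 1 = 0" and lpos: "\<And>n. n \<ge> 2 \<Longrightarrow> 0 < l n \<and> l n < 1"
  and dl: "\<And>n. n \<ge> 1 \<Longrightarrow> d (n+1) = (1 - l n) * l (n+1)"
  using minl unfolding minimal_param_seq_def param_seq_def by auto

definition A where "A n = (\<Prod>j=1..n. 1 + \<i> * complex_of_real (c j))"
definition B where "B n = (\<Prod>j=1..n. 1 - \<i> * complex_of_real (c j))"

lemma A_ne: "A n \<noteq> 0" and B_ne: "B n \<noteq> 0"
  unfolding A_def B_def using ic_ne by (auto simp: prod_zero_iff)

lemma A_Suc: "A (Suc n) = A n * (1 + \<i> * of_real (c (Suc n)))"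
  and B_Suc: "B (Suc n) = B n * (1 - \<i> * of_real (c (Suc n)))"
  unfolding A_def B_def by (simp_all add: prod.cl_ivl_Suc)

lemma cnj_A: "cnj (A n) = B n"
  unfolding A_def B_def by (induction n) (simp_all add: prod.cl_ivl_Suc)

lemma A_0: "A 0 = 1" and B_0: "B 0 = 1" by (simp_all add: A_def B_def)

lemma tau_eq: "tau c n = B n / A n"
  by (induction n) (auto simp: A_Suc B_Suc A_ne B_ne A_0 B_0)

lemma alpha_eq: "verblunsky M m = - (A (m+1) / B (m+1)) *
   ((1 - 2 * of_real (l (m+2)) - \<i> * of_real (c (m+2))) / (1 - \<i> * of_real (c (m+2))))"
  using verb[of "m+1"] tau_eq[of "m+1"] by (simp del: tau.simps)

lemma cnj_alpha_eq: "cnj (verblunsky M m) = - (B (m+1) / A (m+1)) *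
   ((1 - 2 * of_real (l (m+2)) + \<i> * of_real (c (m+2))) / (1 + \<i> * of_real (c (m+2))))"
  unfolding alpha_eq using cnj_A[of "m+1"] by (simp add: cnj_A[symmetric])

lemma zeta_x: assumes "\<zeta> \<noteq> 1"
  shows "\<i> * (\<zeta> + 1) / (\<zeta> - 1) - \<i> \<noteq> 0"
    "\<zeta> = (\<i> * (\<zeta> + 1) / (\<zeta> - 1) + \<i>) / (\<i> * (\<zeta> + 1) / (\<zeta> - 1) - \<i>)"
proof -
  have z: "\<zeta> - 1 \<noteq> 0" using assms by simp
  have e1: "\<i> * (\<zeta> + 1) / (\<zeta> - 1) - \<i> = 2 * \<i> / (\<zeta> - 1)" using z by (simp add: field_simps)
  have e2: "\<i> * (\<zeta> + 1) / (\<zeta> - 1) + \<i> = 2 * \<i> * \<zeta> / (\<zeta> - 1)" using z by (simp add: field_simps)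
  show "\<i> * (\<zeta> + 1) / (\<zeta> - 1) - \<i> \<noteq> 0" using e1 z by simp
  show "\<zeta> = (\<i> * (\<zeta> + 1) / (\<zeta> - 1) + \<i>) / (\<i> * (\<zeta> + 1) / (\<zeta> - 1) - \<i>)"
    unfolding e1 e2 using z by (simp add: field_simps)
qed

lemma closed_form: assumes "\<zeta> \<noteq> 1"
  defines "x \<equiv> \<i> * (\<zeta> + 1) / (\<zeta> - 1)"
  shows "poly (Phi m) \<zeta> = (-\<i> * 2^m / A (m+1)) * (1 / (x - \<i>)^m)
          * (Pn c d (m+1) x - of_real (1 - l (m+1)) * (x - \<i>) * Pn c d m x)
     \<and> poly (rev m (Phi m)) \<zeta> = (\<i> * 2^m / B (m+1)) * (1 / (x - \<i>)^m)
          * (Pn c d (m+1) x - of_real (1 - l (m+1)) * (x + \<i>) * Pn c d m x)"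
proof (induction m)
  case 0
  have "A 1 = 1 + \<i> * of_real (c 1)" "B 1 = 1 - \<i> * of_real (c 1)" by (simp_all add: A_def B_def)
  moreover have "poly (rev 0 1) \<zeta> = 1" by (simp add: poly_rev)
  moreover have "l (Suc 0) = 0" using l1 by simp
  ultimately show ?case using ic_ne[of "c 1"] B_ne[of 1] by (simp add: Phi_0 field_simps)
next
  case (Suc m)
  have xi: "x - \<i> \<noteq> 0" and zx: "\<zeta> = (x + \<i>) / (x - \<i>)"
    using zeta_x[OF assms(1)] unfolding x_def by auto
  have E: "(x - \<i>)^m \<noteq> 0" using xi by simp
  have P2: "Pn c d (Suc m + 1) x = (x - of_real (c (m+2))) * Pn c d (m+1) x
      - of_real ((1 - l (m+1)) * l (m+2)) * (x^2+1) * Pn c d m x"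
    using dl[of "m+1"] by (simp add: numeral_2_eq_2)
  have pw: "(2::complex)^(Suc m) = 2^m * 2" "(x - \<i>)^(Suc m) = (x - \<i>)^m * (x - \<i>)"
    by simp_all
  let ?T = "(2::complex)^m" and ?E = "(x - \<i>)^m" and ?P1 = "Pn c d (m+1) x" and ?P0 = "Pn c d m x"
  have A2: "A (Suc m + 1) = A (m+1) * (1 + \<i> * of_real (c (m+2)))"
    using A_Suc[of "m+1"] by simp
  have B2: "B (Suc m + 1) = B (m+1) * (1 - \<i> * of_real (c (m+2)))"
    using B_Suc[of "m+1"] by simp
  have "poly (Phi (Suc m)) \<zeta> = \<zeta> * poly (Phi m) \<zeta> - cnj (verblunsky M m) * poly (rev m (Phi m)) \<zeta>"
    by (rule poly_szego)
  also have "\<dots> = ((x+\<i>)/(x-\<i>)) * ((-\<i>*?T/A (m+1)) * (1/?E) * (?P1 - of_real (1-l (m+1))*(x-\<i>)*?P0))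
     - (-(B (m+1)/A (m+1)) * ((1 - 2 * of_real (l (m+2)) + \<i> * of_real (c (m+2)))/(1 + \<i> * of_real (c (m+2)))))
        * ((\<i>*?T/B (m+1)) * (1/?E) * (?P1 - of_real (1-l (m+1))*(x+\<i>)*?P0))"
    unfolding Suc.IH[THEN conjunct1] Suc.IH[THEN conjunct2] cnj_alpha_eq
    by (subst zx) (simp only: mult.assoc)
  also have "\<dots> = (-\<i>*(?T*2)/(A (m+1)*(1+\<i> * of_real (c (m+2))))) * (1/(?E*(x-\<i>)))
       * (((x - of_real (c (m+2)))*?P1 - of_real ((1-l (m+1))*l (m+2))*(x^2+1)*?P0) - of_real (1-l (m+2))*(x-\<i>)*?P1)"
    by (rule stepA[OF A_ne B_ne xi E])
  also have "\<dots> = (-\<i> * 2^(Suc m) / A (Suc m + 1)) * (1 / (x - \<i>)^(Suc m))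
          * (Pn c d (Suc m + 1) x - of_real (1 - l (Suc m + 1)) * (x - \<i>) * Pn c d (Suc m) x)"
    unfolding A2 P2 pw by simp
  finally have 1: "poly (Phi (Suc m)) \<zeta> = \<dots>" .
  have "poly (rev (Suc m) (Phi (Suc m))) \<zeta> = poly (rev m (Phi m)) \<zeta> - verblunsky M m * \<zeta> * poly (Phi m) \<zeta>"
    by (rule poly_rev_szego)
  also have "\<dots> = ((\<i>*?T/B (m+1)) * (1/?E) * (?P1 - of_real (1-l (m+1))*(x+\<i>)*?P0))
     - (-(A (m+1)/B (m+1)) * ((1 - 2 * of_real (l (m+2)) - \<i> * of_real (c (m+2)))/(1 - \<i> * of_real (c (m+2))))) * ((x+\<i>)/(x-\<i>))
        * ((-\<i>*?T/A (m+1)) * (1/?E) * (?P1 - of_real (1-l (m+1))*(x-\<i>)*?P0))"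
    unfolding Suc.IH[THEN conjunct1] Suc.IH[THEN conjunct2] alpha_eq
    by (subst zx) (simp only: mult.assoc)
  also have "\<dots> = (\<i>*(?T*2)/(B (m+1)*(1-\<i> * of_real (c (m+2))))) * (1/(?E*(x-\<i>)))
       * (((x - of_real (c (m+2)))*?P1 - of_real ((1-l (m+1))*l (m+2))*(x^2+1)*?P0) - of_real (1-l (m+2))*(x+\<i>)*?P1)"
    by (rule stepB[OF A_ne B_ne xi E])
  also have "\<dots> = (\<i> * 2^(Suc m) / B (Suc m + 1)) * (1 / (x - \<i>)^(Suc m))
          * (Pn c d (Suc m + 1) x - of_real (1 - l (Suc m + 1)) * (x + \<i>) * Pn c d (Suc m) x)"
    unfolding B2 P2 pw by simp
  finally show ?case using 1 by simp
qed


lemma cmod_B: "cmod (B n) = cmod (A n)"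
  by (simp add: cnj_A[symmetric])

lemma cmod_AB: "cmod (A n / B n) = 1"
  using A_ne[of n] by (simp add: norm_divide cmod_B)

lemma alpha_norm: "1 - (cmod (verblunsky M m))^2 = 4 * l (m+2) * (1 - l (m+2)) / (1 + (c (m+2))^2)"
proof -
  let ?u = "1 - 2 * complex_of_real (l (m+2)) - \<i> * of_real (c (m+2))"
  let ?v = "1 - \<i> * complex_of_real (c (m+2))"
  have "cmod (verblunsky M m) = cmod ?u / cmod ?v"
    unfolding alpha_eq using A_ne[of "m+1"] by (simp add: norm_mult norm_divide cmod_B del: of_real_mult)
  then have "(cmod (verblunsky M m))^2 = (cmod ?u)^2 / (cmod ?v)^2" by (simp add: power_divide)
  also have "(cmod ?u)^2 = (1 - 2 * l (m+2))^2 + (c (m+2))^2" by (simp add: cmod_power2)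
  also have "(cmod ?v)^2 = 1 + (c (m+2))^2" by (simp add: cmod_power2)
  finally have e: "(cmod (verblunsky M m))^2 = ((1 - 2 * l (m+2))^2 + (c (m+2))^2) / (1 + (c (m+2))^2)" .
  have p: "1 + (c (m+2))^2 > 0" by (simp add: add_pos_nonneg)
  show ?thesis unfolding e using p by (simp add: field_simps power2_eq_square)
qed

definition Nf :: "nat \<Rightarrow> real" where
  "Nf k = (1 + (c 1)^2) * 2 ^ (2 * k) * (\<Prod>j=1..k+1. d (j+1))
                          / (l (k+2) * (\<Prod>j=1..k+1. 1 + (c j)^2))"

lemma N_formula: "N k = of_real (Nf k)"
proof (induction k)
  case 0
  interpret P: prob_space M by (rule prob)
  have "N 0 = 1" unfolding N_def ip_def Phi_0 using P.prob_space by simp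
  moreover have "Nf 0 = 1"
  proof -
    have a: "l (Suc (Suc 0)) > 0" using lpos[of 2] by (simp add: numeral_2_eq_2)
    have b: "1 + (c 1)^2 > 0" by (simp add: add_pos_nonneg)
    show ?thesis using dl[of 1] l1 a b by (simp add: Nf_def)
  qed
  ultimately show ?case by simp
next
  case (Suc k)
  have pos: "1 + (c (k+2))^2 > 0" by (simp add: add_pos_nonneg)
  have l3: "l (k+3) > 0" using lpos[of "k+3"] by simp
  have pc: "(\<Prod>j=1..k+1. 1 + (c j)^2) > 0" by (intro prod_pos) (simp add: add_pos_nonneg)
  have d3: "d (k+3) = (1 - l (k+2)) * l (k+3)" using dl[of "k+2"] by (simp add: numeral_3_eq_3 numeral_2_eq_2)
  define D where "D = (\<Prod>j=1..k+1. d (j+1))"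
  define C where "C = (\<Prod>j=1..k+1. 1 + (c j)^2)"
  have eD: "(\<Prod>j=1..Suc k+1. d (j+1)) = D * d (k+3)"
    unfolding D_def by (simp add: prod.cl_ivl_Suc numeral_3_eq_3)
  have eC: "(\<Prod>j=1..Suc k+1. 1 + (c j)^2) = C * (1 + (c (k+2))^2)"
    unfolding C_def by (simp add: prod.cl_ivl_Suc numeral_2_eq_2)
  have e4: "(2::real) ^ (2 * Suc k) = 2^(2*k) * 4" by (simp add: power_add)
  have lk2: "l (k+2) > 0" using lpos[of "k+2"] by simp
  have "Nf (Suc k) = (1 + (c 1)^2) * (2^(2*k) * 4) * (D * ((1 - l (k+2)) * l (k+3)))
        / (l (Suc k + 2) * (C * (1 + (c (k+2))^2)))"
    unfolding Nf_def eD eC e4 d3 by simp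
  also have "\<dots> = (4 * l (k+2) * (1 - l (k+2)) / (1 + (c (k+2))^2)) *
     ((1 + (c 1)^2) * 2^(2*k) * D / (l (k+2) * C))"
    using ratio_aux[OF pc[folded C_def] lk2 l3 pos] by (simp add: numeral_3_eq_3 numeral_2_eq_2)
  also have "\<dots> = (1 - (cmod (verblunsky M k))^2) * Nf k"
    unfolding alpha_norm Nf_def D_def C_def by simp
  finally have "Nf (Suc k) = (1 - (cmod (verblunsky M k))^2) * Nf k" .
  then show ?case using N_Suc[of k] Suc.IH by simp
qed

end



lemma Lstep_aux: fixes K G A B u :: complex and lb :: real
  assumes "A \<noteq> 0" "B \<noteq> 0" "u \<noteq> 0"
  shows "-(K*G)/(2*A) + (-(B/A)*((u - 2 * of_real lb)/u)) * (-(K*G)/(2*B)) = -(K*(2 * of_real lb*G))/(2*(A*u))"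
  using assms by (simp add: field_simps)

lemma cancel_aux: fixes u v :: complex shows "u \<noteq> 0 \<Longrightarrow> -(u * v)/(2*u) = -v/2"
  by simp

lemma tstep_aux: fixes L2 RN lb w :: real
  assumes "RN > 0" "lb > 0" "lb < 1" "w > 0"
  shows "(L2 * (4 * lb^2 / w)) / ((4 * lb * (1 - lb) / w) * RN) = (L2 / RN) * (lb / (1 - lb))"
  using assms by (simp add: field_simps power2_eq_square)

context setting begin

definition a0 :: complex where "a0 = - (1 - \<i> * of_real (c 1)) / 2"

definition ell :: "nat \<Rightarrow> complex" where
  "ell j = a0 - (\<Sum>i=1..j. integral\<^sup>L M (\<lambda>z. z^i))"

definition Lf :: "complex poly \<Rightarrow> complex" where
  "Lf r = (\<Sum>j\<le>degree r. coeff r j * ell j)"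

lemma Lf_le: assumes "degree r \<le> n" shows "Lf r = (\<Sum>j\<le>n. coeff r j * ell j)"
  unfolding Lf_def
  by (rule sum.mono_neutral_left) (use assms in \<open>auto simp: coeff_eq_0\<close>)

lemma Lf_add: "Lf (p + q) = Lf p + Lf q"
proof -
  let ?n = "max (degree p) (degree q)"
  have "Lf (p + q) = (\<Sum>j\<le>?n. coeff (p + q) j * ell j)"
    by (rule Lf_le) (simp add: degree_add_le)
  also have "\<dots> = (\<Sum>j\<le>?n. coeff p j * ell j) + (\<Sum>j\<le>?n. coeff q j * ell j)"
    by (simp add: sum.distrib ring_distribs)
  also have "\<dots> = Lf p + Lf q" using Lf_le[of p ?n] Lf_le[of q ?n] by simp
  finally show ?thesis .
qed

lemma Lf_smult: "Lf (smult a p) = a * Lf p"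
proof -
  have "Lf (smult a p) = (\<Sum>j\<le>degree p. coeff (smult a p) j * ell j)"
    by (rule Lf_le) simp
  then show ?thesis by (simp add: Lf_def sum_distrib_left mult.assoc)
qed

lemma Lf_minus: "Lf (p - q) = Lf p - Lf q"
  using Lf_add[of p "-q"] Lf_smult[of "-1" q] by simp

lemma Lf_1: "Lf 1 = a0"
  by (simp add: Lf_def ell_def)

lemma Lf_sum: "Lf (\<Sum>k\<in>K. f k) = (\<Sum>k\<in>K. Lf (f k))"
  by (induction K rule: infinite_finite_induct) (simp_all add: Lf_add Lf_def[of 0])

lemma ell_Suc: "ell (Suc j) = ell j - integral\<^sup>L M (\<lambda>z. z^(Suc j))"
  by (simp add: ell_def)

lemma Lf_shift: "Lf (pCons 0 r) = Lf r - integral\<^sup>L M (\<lambda>z. z * poly r z)"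
proof -
  let ?n = "degree r"
  have "Lf (pCons 0 r) = (\<Sum>j\<le>Suc ?n. coeff (pCons 0 r) j * ell j)"
    by (rule Lf_le) (simp add: degree_pCons_le)
  also have "\<dots> = (\<Sum>j\<le>?n. coeff r j * ell (Suc j))"
    by (subst sum.atMost_Suc_shift) simp
  also have "\<dots> = (\<Sum>j\<le>?n. coeff r j * ell j) - (\<Sum>j\<le>?n. coeff r j * integral\<^sup>L M (\<lambda>z. z^(Suc j)))"
    by (simp add: ell_Suc ring_distribs sum_subtractf)
  also have "(\<Sum>j\<le>?n. coeff r j * integral\<^sup>L M (\<lambda>z. z^(Suc j))) = integral\<^sup>L M (\<lambda>z. z * poly r z)"
  proof -
    have "integral\<^sup>L M (\<lambda>z. z * poly r z) = integral\<^sup>L M (\<lambda>z. (\<Sum>j\<le>?n. coeff r j * z^(Suc j)))"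
      by (simp add: poly_altdef sum_distrib_left mult_ac)
    also have "\<dots> = (\<Sum>j\<le>?n. integral\<^sup>L M (\<lambda>z. coeff r j * z^(Suc j)))"
      by (rule Bochner_Integration.integral_sum) (intro integ continuous_intros)
    finally show ?thesis by simp
  qed
  finally show ?thesis by (simp add: Lf_def)
qed


lemma rev_Phi_Suc: "rev (Suc n) (Phi (Suc n)) = rev n (Phi n) - smult (verblunsky M n) (pCons 0 (Phi n))"
  by (subst szego, subst rev_szego) (auto simp: degree_Phi)

lemma N_0: "N 0 = 1"
proof -
  interpret P: prob_space M by (rule prob)
  show ?thesis unfolding N_def ip_def Phi_0 using P.prob_space by simp
qed

lemma rev01: "rev 0 1 = 1" by (simp add: rev_def)

lemma a0_cnj: "a0 = - cnj a0 - 1" by (simp add: a0_def complex_eq_iff)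

lemma N_Suc': "N (Suc n) = N n - verblunsky M n * cnj (verblunsky M n) * N n"
  using N_Suc[of n] complex_norm_square[of "verblunsky M n"] by (simp add: algebra_simps)

lemma L_rev: "Lf (rev k (Phi k)) = - cnj (Lf (Phi k)) - N k"
proof (induction k)
  case 0 show ?case using a0_cnj by (simp add: Phi_0 rev01 Lf_1 N_0)
next
  case (Suc k)
  let ?a = "verblunsky M k" and ?L = "Lf (Phi k)" and ?Z = "integral\<^sup>L M (\<lambda>z. z * poly (Phi k) z)"
  have LP: "Lf (Phi (Suc k)) = ?L - ?Z - cnj ?a * Lf (rev k (Phi k))"
    by (subst szego) (simp add: Lf_minus Lf_smult Lf_shift)
  have LR: "Lf (rev (Suc k) (Phi (Suc k))) = Lf (rev k (Phi k)) - ?a * (?L - ?Z)"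
    by (subst rev_Phi_Suc) (simp add: Lf_minus Lf_smult Lf_shift del: smult_pCons)
  show ?case unfolding LP LR Suc.IH Z_eq N_Suc' using N_pos(2)[of k]
    by (simp add: algebra_simps)
qed

lemma L_rec: "Lf (Phi (Suc k)) = Lf (Phi k) + cnj (verblunsky M k) * cnj (Lf (Phi k))"
proof -
  have "Lf (Phi (Suc k)) = Lf (Phi k) - integral\<^sup>L M (\<lambda>z. z * poly (Phi k) z)
       - cnj (verblunsky M k) * Lf (rev k (Phi k))"
    by (subst szego) (simp add: Lf_minus Lf_smult Lf_shift)
  then show ?thesis unfolding L_rev Z_eq by (simp add: algebra_simps)
qed


definition Gk :: "nat \<Rightarrow> real" where "Gk k = 2^k * (\<Prod>j=2..k+1. l j)"

lemma L_closed: "Lf (Phi k) = - (of_real (1 + (c 1)^2) * of_real (Gk k)) / (2 * A (k+1))"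
proof (induction k)
  case 0
  have A1: "A (0+1) = 1 + \<i> * of_real (c 1)" by (simp add: A_def)
  have f: "complex_of_real (1 + (c 1)^2) = (1 + \<i> * of_real (c 1)) * (1 - \<i> * of_real (c 1))"
    by (simp add: algebra_simps power2_eq_square)
  have "- (of_real (1 + (c 1)^2) * of_real (Gk 0)) / (2 * A (0+1))
      = - ((1 + \<i> * of_real (c 1)) * (1 - \<i> * of_real (c 1))) / (2 * (1 + \<i> * of_real (c 1)))"
    unfolding A1 f by (simp add: Gk_def)
  also have "\<dots> = - (1 - \<i> * of_real (c 1)) / 2"
    using ic_ne(1)[of "c 1"] by (rule cancel_aux)
  finally show ?case by (simp add: Phi_0 Lf_1 a0_def)
next
  case (Suc k)
  have G: "Gk (Suc k) = 2 * l (k+2) * Gk k"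
    by (simp add: Gk_def prod.cl_ivl_Suc numeral_2_eq_2)
  have A2: "A (Suc k + 1) = A (k+1) * (1 + \<i> * of_real (c (k+2)))"
    using A_Suc[of "k+1"] by simp
  have cL: "cnj (Lf (Phi k)) = - (of_real (1 + (c 1)^2) * of_real (Gk k)) / (2 * B (k+1))"
    unfolding Suc.IH by (simp add: cnj_A)
  have e1: "1 - 2 * complex_of_real (l (k + 2)) + \<i> * complex_of_real (c (k + 2))
     = (1 + \<i> * of_real (c (k+2))) - 2 * of_real (l (k+2))" by simp
  show ?case unfolding L_rec cL cnj_alpha_eq
    unfolding Suc.IH e1 A2 G
    using Lstep_aux[where K="of_real (1 + (c 1)^2)" and G="of_real (Gk k)" and lb="l (k+2)",
        OF A_ne[of "k+1"] B_ne[of "k+1"] ic_ne(1)[of "c (k+2)"]]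
    by simp
qed

lemma L_ratio: "Lf (Phi (Suc k)) = Lf (Phi k) * (2 * of_real (l (k+2)) / (1 + \<i> * of_real (c (k+2))))"
proof -
  have G: "Gk (Suc k) = 2 * l (k+2) * Gk k"
    by (simp add: Gk_def prod.cl_ivl_Suc numeral_2_eq_2)
  have A2: "A (Suc k + 1) = A (k+1) * (1 + \<i> * of_real (c (k+2)))"
    using A_Suc[of "k+1"] by simp
  show ?thesis unfolding L_closed G A2 using A_ne[of "k+1"] ic_ne(1)[of "c (k+2)"]
    by (simp add: field_simps)
qed

fun aa :: "nat \<Rightarrow> real" where
  "aa 0 = 1"
| "aa (Suc k) = aa k * l (k+2) / (1 - l (k+2))"

lemma aa_nonneg: "aa k \<ge> 0"
  by (induction k) (use lpos in \<open>auto intro!: divide_nonneg_pos mult_nonneg_nonneg simp: less_imp_le\<close>)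

lemma t_eq: "(cmod (Lf (Phi k)))^2 / Re (N k) = (1 + (c 1)^2) / 4 * aa k"
proof (induction k)
  case 0
  have "(cmod a0)^2 = (1 + (c 1)^2) / 4"
    by (simp add: a0_def cmod_power2 power_divide)
  then show ?case by (simp add: Phi_0 Lf_1 N_0)
next
  case (Suc k)
  have w: "1 + (c (k+2))^2 > 0" by (simp add: add_pos_nonneg)
  have lb: "0 < l (k+2)" "l (k+2) < 1" using lpos[of "k+2"] by auto
  have cm: "(cmod (Lf (Phi (Suc k))))^2 = (cmod (Lf (Phi k)))^2 * (4 * (l (k+2))^2 / (1 + (c (k+2))^2))"
    unfolding L_ratio norm_mult norm_divide
    by (simp add: power_mult_distrib power_divide cmod_power2 abs_of_pos lb)
  have RN: "Re (N (Suc k)) = (4 * l (k+2) * (1 - l (k+2)) / (1 + (c (k+2))^2)) * Re (N k)"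
    using N_Suc[of k] alpha_norm[of k] by simp
  show ?case unfolding cm RN tstep_aux[OF N_pos(1) lb w] Suc.IH by simp
qed


lemma param_unique: assumes g: "param_seq d g" and g1: "g 1 = 0"
  shows "n \<ge> 1 \<Longrightarrow> g n = l n"
proof (induction n rule: dec_induct)
  case base then show ?case using g1 l1 by simp
next
  case (step n)
  have "d (n+1) = (1 - g n) * g (n+1)" using g step.hyps unfolding param_seq_def by auto
  moreover have "d (n+1) = (1 - l n) * l (n+1)" using dl step.hyps by auto
  moreover have "1 - l n \<noteq> 0"
  proof (cases "n = 1")
    case True then show ?thesis using l1 by simp
  next
    case False then show ?thesis using lpos[of n] step.hyps by auto
  qed
  ultimately show ?case using step.IH by simp
qed

lemma exists_H: assumes "multiple_param_seqs d" shows "\<exists>H. param_seq d H \<and> H 1 > 0"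
proof -
  obtain g h n where g: "param_seq d g" and h: "param_seq d h" and n: "n \<ge> 1" "g n \<noteq> h n"
    using assms unfolding multiple_param_seqs_def by auto
  have "g 1 \<noteq> 0 \<or> h 1 \<noteq> 0"
    using param_unique[OF g, of n] param_unique[OF h, of n] n by auto
  moreover have "g 1 \<ge> 0" "h 1 \<ge> 0" using g h unfolding param_seq_def by auto
  ultimately show ?thesis using g h by (metis less_eq_real_def)
qed

lemma sum_aa_bound: assumes H: "param_seq d H" and H1: "H 1 > 0"
  shows "(\<Sum>k<n. aa k) \<le> 1 / H 1"
proof -
  define e where "e j = H j - l j" for j
  have Hlt: "H j < 1" if "j \<ge> 1" for j
    using H that unfolding param_seq_def by (cases "j = 1") auto
  have dH: "d (j+1) = (1 - H j) * H (j+1)" if "j \<ge> 1" for j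
    using H that unfolding param_seq_def by auto
  have lp: "l (j+1) > 0" if "j \<ge> 1" for j using lpos[of "j+1"] that by auto
  have epos: "e j > 0" if "j \<ge> 1" for j
    using that
  proof (induction j rule: dec_induct)
    case base then show ?case using H1 l1 by (simp add: e_def)
  next
    case (step j)
    have ll: "1 - l j > 0"
      using l1 lpos[of j] step.hyps by (cases "j = 1") auto
    have "(1 - H j) * H (j+1) = (1 - l j) * l (j+1)" using dH[of j] dl[of j] step.hyps by simp
    then have "e (j+1) * (1 - H j) = l (j+1) * e j"
      unfolding e_def by (simp add: algebra_simps)
    moreover have "l (j+1) * e j > 0" using lp[of j] step by simp
    moreover have "1 - H j > 0" using Hlt[of j] step.hyps by simp
    ultimately have "e (j+1) * (1 - H j) > 0" "1 - H j > 0" by auto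
    then show ?case using zero_less_mult_pos2 by (metis Suc_eq_plus1)
  qed
  have rel: "(1 - l j) / e j = 1 + l (j+1) / e (j+1)" if "j \<ge> 1" for j
  proof -
    have "(1 - H j) * H (j+1) = (1 - l j) * l (j+1)" using dH[of j] dl[of j] that by simp
    then show ?thesis using epos[of j] epos[of "j+1"] that unfolding e_def
      by (simp add: field_simps)
  qed
  have inv: "1 / e 1 = (\<Sum>k<n. aa k) + aa n * (1 - l (n+1)) / e (n+1)" for n
  proof (induction n)
    case 0 then show ?case using l1 by simp
  next
    case (Suc n)
    have ln: "1 - l (n+2) \<noteq> 0" using lpos[of "n+2"] by simp
    have "aa n * (1 - l (n+1)) / e (n+1) = aa n * ((1 - l (n+1)) / e (n+1))" by simp
    also have "\<dots> = aa n + aa n * l (n+2) / e (n+2)"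
      using rel[of "n+1"] by (simp add: algebra_simps numeral_2_eq_2)
    also have "aa n * l (n+2) / e (n+2) = aa (Suc n) * (1 - l (Suc n + 1)) / e (Suc n + 1)"
      using ln by (simp add: numeral_2_eq_2)
    finally show ?case using Suc.IH by simp
  qed
  have "aa n * (1 - l (n+1)) / e (n+1) \<ge> 0"
  proof -
    have "1 - l (n+1) \<ge> 0" using l1 lpos[of "n+1"] by (cases n) auto
    then show ?thesis using aa_nonneg[of n] epos[of "n+1"] by simp
  qed
  then show ?thesis using inv[of n] H1 l1 by (simp add: e_def)
qed


lemma expand: "degree r \<le> n \<Longrightarrow> \<exists>b. r = (\<Sum>k\<le>n. smult (b k) (Phi k))"
proof (induction n arbitrary: r)
  case 0
  then have "r = smult (coeff r 0) (Phi 0)" by (simp add: Phi_0 degree_0_id)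
  then show ?case by auto
next
  case (Suc n)
  let ?r' = "r - smult (coeff r (Suc n)) (Phi (Suc n))"
  have "degree ?r' \<le> n"
  proof (rule degree_le, intro allI impI)
    fix i assume i: "n < i"
    show "coeff ?r' i = 0"
    proof (cases "i = Suc n")
      case True then show ?thesis by (simp add: coeff_Phi)
    next
      case False then have "i > Suc n" "i > degree (Phi (Suc n))" using i by (auto simp: degree_Phi)
      then show ?thesis using Suc.prems by (simp add: coeff_eq_0)
    qed
  qed
  then obtain b where b: "?r' = (\<Sum>k\<le>n. smult (b k) (Phi k))" using Suc.IH by blast
  define b' where "b' = b(Suc n := coeff r (Suc n))"
  have "(\<Sum>k\<le>Suc n. smult (b' k) (Phi k)) = (\<Sum>k\<le>n. smult (b k) (Phi k)) + smult (coeff r (Suc n)) (Phi (Suc n))"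
    by (simp add: b'_def)
  also have "\<dots> = r" using b[symmetric] by simp
  finally show ?case using sym by blast
qed

lemma ip_smult_left: "ip (smult a p) q = cnj a * ip p q"
  unfolding ip_def by (simp add: mult.assoc)

lemma ip_smult_right: "ip p (smult a q) = a * ip p q"
  unfolding ip_def by (simp add: mult_ac)

lemma ip_sum_left: "ip (\<Sum>k\<in>K. f k) q = (\<Sum>k\<in>K. ip (f k) q)"
proof (cases "finite K")
  case True
  have "ip (\<Sum>k\<in>K. f k) q = integral\<^sup>L M (\<lambda>z. \<Sum>k\<in>K. cnj (poly (f k) z) * poly q z)"
    unfolding ip_def by (simp add: poly_sum cnj_sum sum_distrib_right)
  also have "\<dots> = (\<Sum>k\<in>K. ip (f k) q)" unfolding ip_def
    by (rule Bochner_Integration.integral_sum) (intro integ continuous_intros)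
  finally show ?thesis .
qed (simp add: ip_def)

lemma ip_sum_right: "ip p (\<Sum>k\<in>K. f k) = (\<Sum>k\<in>K. ip p (f k))"
proof -
  have "ip p (\<Sum>k\<in>K. f k) = cnj (ip (\<Sum>k\<in>K. f k) p)" by (rule ip_cnj)
  also have "\<dots> = (\<Sum>k\<in>K. cnj (ip (f k) p))" by (simp only: ip_sum_left cnj_sum)
  also have "\<dots> = (\<Sum>k\<in>K. ip p (f k))" by (intro sum.cong refl) (rule ip_cnj[symmetric])
  finally show ?thesis .
qed

lemma ip_expansion: "ip (\<Sum>k\<le>n. smult (b k) (Phi k)) (\<Sum>k\<le>n. smult (b k) (Phi k))
    = (\<Sum>k\<le>n. cnj (b k) * b k * N k)"
proof -
  have "ip (\<Sum>k\<le>n. smult (b k) (Phi k)) (\<Sum>k\<le>n. smult (b k) (Phi k))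
     = (\<Sum>j\<le>n. \<Sum>k\<le>n. cnj (b j) * (b k * ip (Phi j) (Phi k)))"
    apply (simp add: ip_sum_left ip_sum_right ip_smult_left ip_smult_right sum_distrib_left)
    apply (subst sum.swap)
    apply (simp add: mult_ac)
    done
  also have "\<dots> = (\<Sum>j\<le>n. \<Sum>k\<le>n. if k = j then cnj (b j) * (b j * N j) else 0)"
    by (intro sum.cong refl) (auto simp: ip_Phi)
  also have "\<dots> = (\<Sum>k\<le>n. cnj (b k) * b k * N k)" by (simp add: mult.assoc)
  finally show ?thesis .
qed

definition lam :: "real \<Rightarrow> real" where "lam h = (1 + (c 1)^2) / (4 * h)"

lemma L_bound: assumes H: "param_seq d H" and H1: "H 1 > 0"
  shows "(cmod (Lf r))^2 \<le> lam (H 1) * Re (ip r r)"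
proof -
  obtain b where b: "r = (\<Sum>k\<le>degree r. smult (b k) (Phi k))" using expand[of r "degree r"] by auto
  define n where "n = degree r"
  have RN: "\<And>k. Re (N k) > 0" using N_pos(1) .
  have RN0: "\<And>k. Re (N k) \<noteq> 0" using N_pos(1) by (metis less_irrefl)
  have NN: "N k = of_real (Re (N k))" for k using N_pos(2)[of k] by (simp add: complex_eq_iff)
  have Lr: "Lf r = (\<Sum>k\<le>n. b k * Lf (Phi k))"
    by (subst b) (simp add: Lf_sum Lf_smult n_def)
  have ipr: "Re (ip r r) = (\<Sum>k\<le>n. (cmod (b k))^2 * Re (N k))"
  proof -
    have "ip r r = (\<Sum>k\<le>n. cnj (b k) * b k * N k)" unfolding n_def by (subst b, subst b, rule ip_expansion)
    also have "\<dots> = of_real (\<Sum>k\<le>n. (cmod (b k))^2 * Re (N k))"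
    proof -
      have "cnj (b k) * b k * N k = of_real ((cmod (b k))^2 * Re (N k))" for k
      proof -
        have t: "cnj (b k) * b k = of_real ((cmod (b k))^2)"
          using complex_norm_square[of "b k"] by (simp add: mult.commute)
        show ?thesis by (simp only: t of_real_mult NN[of k, symmetric])
      qed
      then show ?thesis by (simp add: of_real_sum)
    qed
    finally show ?thesis by simp
  qed
  have "cmod (Lf r) \<le> (\<Sum>k\<le>n. cmod (b k) * cmod (Lf (Phi k)))"
    unfolding Lr by (rule order_trans[OF norm_sum]) (simp add: norm_mult)
  also have "\<dots> = (\<Sum>k\<le>n. (cmod (b k) * sqrt (Re (N k))) * (cmod (Lf (Phi k)) / sqrt (Re (N k))))"
    using RN by (intro sum.cong refl) (auto simp add: field_simps RN0)
  finally have "(cmod (Lf r))^2 \<le> (\<Sum>k\<le>n. (cmod (b k) * sqrt (Re (N k))) * (cmod (Lf (Phi k)) / sqrt (Re (N k))))^2"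
    by (intro power_mono) auto
  also have "\<dots> \<le> (\<Sum>k\<le>n. (cmod (b k) * sqrt (Re (N k)))^2) * (\<Sum>k\<le>n. (cmod (Lf (Phi k)) / sqrt (Re (N k)))^2)"
    by (rule Cauchy_Schwarz_ineq_sum)
  also have "(\<Sum>k\<le>n. (cmod (b k) * sqrt (Re (N k)))^2) = Re (ip r r)"
    unfolding ipr by (intro sum.cong refl) (simp add: power_mult_distrib less_imp_le[OF RN])
  also have "(\<Sum>k\<le>n. (cmod (Lf (Phi k)) / sqrt (Re (N k)))^2) = (1 + (c 1)^2) / 4 * (\<Sum>k\<le>n. aa k)"
    unfolding sum_distrib_left
    by (intro sum.cong refl) (simp only: power_divide real_sqrt_pow2[OF less_imp_le[OF RN]] t_eq)
  finally have 1: "(cmod (Lf r))^2 \<le> Re (ip r r) * ((1 + (c 1)^2) / 4 * (\<Sum>k\<le>n. aa k))" .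
  have 2: "(1 + (c 1)^2) / 4 * (\<Sum>k\<le>n. aa k) \<le> (1 + (c 1)^2) / 4 * (1 / H 1)"
    using sum_aa_bound[OF H H1, of "Suc n"]
    by (intro mult_left_mono) (auto simp: lessThan_Suc_atMost add_nonneg_nonneg)
  have nn: "Re (ip r r) \<ge> 0" unfolding ipr
    by (intro sum_nonneg mult_nonneg_nonneg) (auto intro: less_imp_le[OF RN])
  have "(cmod (Lf r))^2 \<le> Re (ip r r) * ((1 + (c 1)^2) / 4 * (1 / H 1))"
    using 1 mult_left_mono[OF 2 nn] by linarith
  then show ?thesis by (simp add: lam_def mult.commute)
qed

end



lemma pw_aux: fixes z w :: complex assumes "cmod z = 1"
  shows "(cmod (1 + (z - 1) * w))^2 + (cmod (1 + (1 + z) * w))^2 = 2 + 4 * Re (z * w) + 4 * (cmod w)^2"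
proof -
  have h: "(Re z)^2 + (Im z)^2 = 1" using assms by (simp add: cmod_def)
  have h2: "((Re z)^2 + (Im z)^2) * ((Re w)^2 + (Im w)^2) = (Re w)^2 + (Im w)^2" using h by simp
  show ?thesis unfolding cmod_power2 using h2 by (simp add: algebra_simps power2_eq_square)
qed

lemma ineq_aux: fixes u t lam :: real
  assumes "u^2 \<le> lam * t" "t \<ge> 0" "lam \<ge> 0"
  shows "2 * u \<le> lam + t"
proof -
  have "(2*u)^2 \<le> 4 * (lam * t)" using assms(1) by (simp add: power_mult_distrib)
  also have "\<dots> \<le> (lam + t)^2" using sum_squares_ge_zero[of "lam - t" 0]
    by (simp add: power2_eq_square algebra_simps)
  finally have sq: "(2*u)^2 \<le> (lam + t)^2" .
  show ?thesis by (rule power2_le_imp_le[OF sq]) (use assms(2,3) in simp)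
qed

context setting begin

fun rr :: "nat \<Rightarrow> complex poly" where
  "rr 0 = 0"
| "rr (Suc n) = smult (1/2) (1 + [:1,1:] * rr n)"

definition pp :: "nat \<Rightarrow> complex poly" where "pp n = 1 + [:-1,1:] * rr n"

lemma poly_pp: "poly (pp n) z = ((1 + z) / 2)^n"
proof (induction n)
  case 0 then show ?case by (simp add: pp_def)
next
  case (Suc n)
  have "poly (pp (Suc n)) z = ((1 + z)/2) * poly (pp n) z"
    by (simp add: pp_def field_simps)
  then show ?case using Suc.IH by simp
qed

definition nrm :: "complex poly \<Rightarrow> real" where "nrm p = integral\<^sup>L M (\<lambda>z. (cmod (poly p z))^2)"

lemma Re_ip: "Re (ip p p) = nrm p" by (simp add: ip_self nrm_def)

lemma Lf_rr_Suc: "Lf (rr (Suc n)) = (a0 + 2 * Lf (rr n) - integral\<^sup>L M (\<lambda>z. z * poly (rr n) z)) / 2"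
proof -
  have "[:1,1:] * rr n = rr n + pCons 0 (rr n)" by simp
  then show ?thesis by (simp add: Lf_smult Lf_add Lf_1 Lf_shift)
qed

lemma identity: "(\<Sum>k<n. nrm (pp k)) = 4 * (- 2 * Re (Lf (rr n)) - nrm (rr n))"
proof (induction n)
  case 0 then show ?case by (simp add: nrm_def Lf_def)
next
  case (Suc n)
  let ?r = "rr n"
  have pt: "\<And>z. cmod z = 1 \<Longrightarrow> (cmod (poly (pp n) z))^2 + 4 * (cmod (poly (rr (Suc n)) z))^2
     = 2 + 4 * Re (z * poly ?r z) + 4 * (cmod (poly ?r z))^2"
  proof -
    fix z :: complex assume z: "cmod z = 1"
    have e: "poly (rr (Suc n)) z = (1 + (1 + z) * poly ?r z) / 2" by (simp add: field_simps)
    have "4 * (cmod (poly (rr (Suc n)) z))^2 = (cmod (1 + (1 + z) * poly ?r z))^2"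
      unfolding e by (simp add: norm_divide power_divide)
    moreover have "poly (pp n) z = 1 + (z - 1) * poly ?r z" by (simp add: pp_def algebra_simps)
    ultimately show "?thesis z" using pw_aux[OF z, of "poly ?r z"] by simp
  qed
  have int: "nrm (pp n) + 4 * nrm (rr (Suc n)) = 2 + 4 * Re (integral\<^sup>L M (\<lambda>z. z * poly ?r z)) + 4 * nrm ?r"
  proof -
    interpret P: prob_space M by (rule prob)
    have "nrm (pp n) + 4 * nrm (rr (Suc n)) = integral\<^sup>L M (\<lambda>z. (cmod (poly (pp n) z))^2 + 4 * (cmod (poly (rr (Suc n)) z))^2)"
      unfolding nrm_def by (subst Bochner_Integration.integral_add) (auto intro!: integ continuous_intros)
    also have "\<dots> = integral\<^sup>L M (\<lambda>z. 2 + 4 * Re (z * poly ?r z) + 4 * (cmod (poly ?r z))^2)"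
      using pt AE_circ
      by (intro integral_cong_AE meas continuous_intros) (auto elim: AE_mp)
    also have "\<dots> = 2 + 4 * integral\<^sup>L M (\<lambda>z. Re (z * poly ?r z)) + 4 * nrm ?r"
    proof -
      have "integral\<^sup>L M (\<lambda>z. 2 + 4 * Re (z * poly ?r z) + 4 * (cmod (poly ?r z))^2)
          = integral\<^sup>L M (\<lambda>z. 2 + 4 * Re (z * poly ?r z)) + integral\<^sup>L M (\<lambda>z. 4 * (cmod (poly ?r z))^2)"
        by (rule Bochner_Integration.integral_add) (intro integ continuous_intros)+
      also have "integral\<^sup>L M (\<lambda>z. 2 + 4 * Re (z * poly ?r z))
          = integral\<^sup>L M (\<lambda>z. 2) + integral\<^sup>L M (\<lambda>z. 4 * Re (z * poly ?r z))"
        by (rule Bochner_Integration.integral_add) (intro integ continuous_intros)+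
      also have "integral\<^sup>L M (\<lambda>z. 4 * Re (z * poly ?r z)) = 4 * integral\<^sup>L M (\<lambda>z. Re (z * poly ?r z))"
        by (rule integral_mult_right_zero)
      also have "integral\<^sup>L M (\<lambda>z. 4 * (cmod (poly ?r z))^2) = 4 * integral\<^sup>L M (\<lambda>z. (cmod (poly ?r z))^2)"
        by (rule integral_mult_right_zero)
      also have "integral\<^sup>L M (\<lambda>z. 2) = (2::real)" by (simp add: P.prob_space)
      finally show ?thesis unfolding nrm_def by simp
    qed
    also have "integral\<^sup>L M (\<lambda>z. Re (z * poly ?r z)) = Re (integral\<^sup>L M (\<lambda>z. z * poly ?r z))"
      by (rule integral_Re) (intro integ continuous_intros)
    finally show ?thesis .
  qed
  have "Re a0 = - 1/2" by (simp add: a0_def)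
  then have R: "Re (Lf (rr (Suc n))) = (- 1/2 + 2 * Re (Lf ?r) - Re (integral\<^sup>L M (\<lambda>z. z * poly ?r z))) / 2"
    unfolding Lf_rr_Suc by simp
  have gen: "\<And>S RL RZ nr np nrs::real. S = 4*(-2*RL - nr) \<Longrightarrow> np + 4*nrs = 2 + 4*RZ + 4*nr
      \<Longrightarrow> S + np = 4*(-2*((-1/2 + 2*RL - RZ)/2) - nrs)" by (simp add: field_simps)
  show ?case unfolding sum.lessThan_Suc R by (rule gen[OF Suc.IH int])
qed

end



lemma sum_const_inf: "(\<Sum>k. ennreal (1/4)) = \<infinity>"
proof -
  have le: "ennreal (real n / 4) \<le> (\<Sum>k. ennreal (1/4))" for n
  proof -
    have "(\<Sum>k<n. ennreal (1/4)) = ennreal (\<Sum>k<n. 1/4)" by (rule sum_ennreal) simp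
    then have "ennreal (real n / 4) = (\<Sum>k<n. ennreal (1/4))" by simp
    also have "\<dots> \<le> (\<Sum>k. ennreal (1/4))" unfolding suminf_eq_SUP by (rule SUP_upper) simp
    finally show ?thesis .
  qed
  show ?thesis
  proof (cases "(\<Sum>k. ennreal (1/4))" rule: ennreal_cases)
    case (real r)
    let ?n = "nat \<lceil>4 * r\<rceil> + 1"
    have "ennreal (real ?n / 4) \<le> ennreal r" using le[of ?n] real by simp
    then have "real ?n / 4 \<le> r" using real by (simp add: ennreal_le_iff)
    moreover have "real ?n / 4 > r"
    proof -
      have a: "4 * r \<le> of_int \<lceil>4*r\<rceil>" by (rule le_of_int_ceiling)
      have b: "of_int \<lceil>4*r\<rceil> = real (nat \<lceil>4*r\<rceil>)" using real(1) by simp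
      show ?thesis using a b by simp
    qed
    ultimately show ?thesis by simp
  qed simp
qed

context setting begin

lemma S_bound: assumes H: "param_seq d H" and H1: "H 1 > 0"
  shows "(\<Sum>k<n. nrm (pp k)) \<le> 4 * lam (H 1)"
proof -
  let ?r = "rr n"
  have lam0: "lam (H 1) \<ge> 0" using H1 by (simp add: lam_def add_nonneg_nonneg)
  have t0: "nrm ?r \<ge> 0" unfolding nrm_def by (rule Bochner_Integration.integral_nonneg) simp
  have "(cmod (Lf ?r))^2 \<le> lam (H 1) * nrm ?r" using L_bound[OF H H1, of ?r] by (simp add: Re_ip)
  from ineq_aux[OF this t0 lam0] have "2 * cmod (Lf ?r) \<le> lam (H 1) + nrm ?r" .
  moreover have "- Re (Lf ?r) \<le> cmod (Lf ?r)" using abs_Re_le_cmod[of "Lf ?r"] by linarith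
  ultimately have "- 2 * Re (Lf ?r) - nrm ?r \<le> lam (H 1)" by linarith
  then show ?thesis unfolding identity by simp
qed

lemma part2: assumes "multiple_param_seqs d"
  shows "(\<integral>\<^sup>+ \<zeta>. (if \<zeta> = 1 then \<infinity> else ennreal (1 / (cmod (\<zeta> - 1))^2)) \<partial>M) < \<infinity>"
proof -
  obtain H where H: "param_seq d H" and H1: "H 1 > 0" using exists_H[OF assms] by blast
  define f where "f k z = ennreal ((cmod (poly (pp k) z))^2 / 4)" for k z
  have meas_f: "f k \<in> borel_measurable M" for k
    unfolding f_def by (rule measurable_compose[OF meas measurable_ennreal]) (auto intro!: continuous_intros)
  have pw: "(if z = 1 then \<infinity> else ennreal (1 / (cmod (z - 1))^2)) \<le> (\<Sum>k. f k z)" if z: "cmod z = 1" for z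
  proof (cases "z = 1")
    case True
    then have "f k z = ennreal (1/4)" for k by (simp add: f_def poly_pp)
    then show ?thesis using True sum_const_inf by simp
  next
    case False
    let ?q = "(cmod ((1 + z) / 2))^2"
    have Rz: "Re z < 1"
    proof (rule ccontr)
      assume "\<not> Re z < 1"
      moreover have "(Re z)^2 + (Im z)^2 = 1" using z by (simp add: cmod_def)
      moreover have "Re z \<le> 1" using abs_Re_le_cmod[of z] z by simp
      ultimately have "Re z = 1" "Im z = 0" by (auto simp: power2_eq_square)
      then show False using False by (simp add: complex_eq_iff)
    qed
    have h: "(Re z)^2 + (Im z)^2 = 1" using z by (simp add: cmod_def)
    have c1: "(cmod (1 + z))^2 = 2 + 2 * Re z"
      using h unfolding cmod_power2 by (simp add: power2_eq_square algebra_simps)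
    have q: "?q = (2 + 2 * Re z) / 4"
      using c1 by (simp add: norm_divide power_divide)
    have q1: "?q < 1" "?q \<ge> 0" using q Rz by auto
    have fk: "f k z = ennreal (?q^k / 4)" for k
      by (simp add: f_def poly_pp norm_power power_mult_distrib[symmetric] power_mult[symmetric] mult.commute)
    have sm: "summable (\<lambda>k. ?q^k / 4)"
      using q1 by (intro summable_divide summable_geometric) simp
    have "(\<Sum>k. f k z) = ennreal (\<Sum>k. ?q^k / 4)"
      unfolding fk by (rule suminf_ennreal2) (use q1 sm in auto)
    also have "(\<Sum>k. ?q^k / 4) = (1 / (1 - ?q)) / 4"
      using q1 by (simp add: suminf_divide[OF summable_geometric] suminf_geometric)
    also have "(1 / (1 - ?q)) / 4 = 1 / (cmod (z - 1))^2"
    proof -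
      have e: "(cmod (z - 1))^2 = 2 - 2 * Re z"
        using h unfolding cmod_power2 by (simp add: power2_eq_square algebra_simps)
      have ne: "2 - 2 * Re z \<noteq> 0" "1 - (2 + 2 * Re z) / 4 \<noteq> 0" using Rz by auto
      show ?thesis unfolding q e using ne by (simp add: field_simps)
    qed
    finally show ?thesis using False by simp
  qed
  have "(\<integral>\<^sup>+ \<zeta>. (if \<zeta> = 1 then \<infinity> else ennreal (1 / (cmod (\<zeta> - 1))^2)) \<partial>M) \<le> (\<integral>\<^sup>+ z. (\<Sum>k. f k z) \<partial>M)"
  proof (rule nn_integral_mono_AE)
    show "AE z in M. (if z = 1 then \<infinity> else ennreal (1 / (cmod (z - 1))^2)) \<le> (\<Sum>k. f k z)"
      using AE_circ by eventually_elim (rule pw)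
  qed
  also have "\<dots> = (\<Sum>k. integral\<^sup>N M (f k))" by (rule nn_integral_suminf[OF meas_f])
  also have "(\<Sum>k. integral\<^sup>N M (f k)) = (\<Sum>k. ennreal (nrm (pp k) / 4))"
  proof (intro suminf_cong)
    fix k show "integral\<^sup>N M (f k) = ennreal (nrm (pp k) / 4)"
  proof -
    have "integral\<^sup>N M (f k) = ennreal (integral\<^sup>L M (\<lambda>z. (cmod (poly (pp k) z))^2 / 4))"
      unfolding f_def by (rule nn_integral_eq_integral) (auto intro!: integ continuous_intros)
    then show ?thesis by (simp add: nrm_def)
  qed
  qed
  also have "(\<Sum>k. ennreal (nrm (pp k) / 4)) \<le> ennreal (lam (H 1))"
    unfolding suminf_eq_SUP
  proof (rule SUP_least)
    fix n
    have nn: "\<And>k. nrm (pp k) / 4 \<ge> 0" unfolding nrm_def by (simp add: Bochner_Integration.integral_nonneg)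
    have "(\<Sum>k<n. ennreal (nrm (pp k) / 4)) = ennreal (\<Sum>k<n. nrm (pp k) / 4)"
      using nn by (rule sum_ennreal)
    also have "\<dots> \<le> ennreal (lam (H 1))"
      using S_bound[OF H H1, of n] by (intro ennreal_leI) (simp add: sum_divide_distrib[symmetric])
    finally show "(\<Sum>k<n. ennreal (nrm (pp k) / 4)) \<le> ennreal (lam (H 1))" .
  qed
  finally show ?thesis by (simp add: le_less_trans)
qed

end

theorem theorem3p2:
  fixes c d l :: "nat \<Rightarrow> real" and \<mu> :: "complex measure"
  assumes chain: "positive_chain_seq d"
    and minl: "minimal_param_seq d l"
    and mu: "nontrivial_prob_on_circle \<mu>"
    and verb: "\<And>n. n \<ge> 1 \<Longrightarrow> verblunsky \<mu> (n - 1) =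
        - (1 / tau c n) * ((1 - 2 * of_real (l (n+1)) - \<i> * of_real (c (n+1)))
                          / (1 - \<i> * of_real (c (n+1))))"
  shows "(\<exists>\<Phi>. monic_OPs \<mu> \<Phi> \<and>
           (\<forall>k\<ge>1. \<forall>\<zeta>. \<zeta> \<noteq> 1 \<longrightarrow>
              (let x = \<i> * (\<zeta> + 1) / (\<zeta> - 1) in
               poly (\<Phi> (k - 1)) \<zeta> =
                 (- \<i> * 2 ^ (k - 1) / (\<Prod>j=1..k. 1 + \<i> * of_real (c j)))
                 * (1 / (x - \<i>) ^ (k - 1))
                 * (Pn c d k x - of_real (1 - l k) * (x - \<i>) * Pn c d (k - 1) x))) \<and>
           (\<forall>m k. integral\<^sup>L \<mu> (\<lambda>\<zeta>. cnj (poly (\<Phi> m) \<zeta>) * poly (\<Phi> k) \<zeta>) =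
              (if m = k then
                 of_real ((1 + (c 1)^2) * 2 ^ (2 * k) * (\<Prod>j=1..k+1. d (j+1))
                          / (l (k+2) * (\<Prod>j=1..k+1. 1 + (c j)^2)))
               else 0)))
       \<and> (multiple_param_seqs d \<longrightarrow>
           (\<integral>\<^sup>+ \<zeta>. (if \<zeta> = 1 then \<infinity> else ennreal (1 / (cmod (\<zeta> - 1))^2)) \<partial>\<mu>) < \<infinity>)"
proof -
  interpret S: setting \<mu> c d l
    by unfold_locales (use mu minl verb in auto)
  have 1: "monic_OPs \<mu> S.Phi" unfolding monic_OPs_def using S.Phi_OP by blast
  have 2: "\<forall>k\<ge>1. \<forall>\<zeta>. \<zeta> \<noteq> 1 \<longrightarrow>
              (let x = \<i> * (\<zeta> + 1) / (\<zeta> - 1) in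
               poly (S.Phi (k - 1)) \<zeta> =
                 (- \<i> * 2 ^ (k - 1) / (\<Prod>j=1..k. 1 + \<i> * of_real (c j)))
                 * (1 / (x - \<i>) ^ (k - 1))
                 * (Pn c d k x - of_real (1 - l k) * (x - \<i>) * Pn c d (k - 1) x))"
  proof (intro allI impI)
    fix k :: nat and \<zeta> :: complex assume k: "k \<ge> 1" and z: "\<zeta> \<noteq> 1"
    obtain m where m: "k = Suc m" using k by (cases k) auto
    show "let x = \<i> * (\<zeta> + 1) / (\<zeta> - 1) in
               poly (S.Phi (k - 1)) \<zeta> =
                 (- \<i> * 2 ^ (k - 1) / (\<Prod>j=1..k. 1 + \<i> * of_real (c j)))
                 * (1 / (x - \<i>) ^ (k - 1))
                 * (Pn c d k x - of_real (1 - l k) * (x - \<i>) * Pn c d (k - 1) x)"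
      using S.closed_form[OF z, of m] unfolding m Let_def S.A_def by simp
  qed
  have 3: "\<forall>m k. integral\<^sup>L \<mu> (\<lambda>\<zeta>. cnj (poly (S.Phi m) \<zeta>) * poly (S.Phi k) \<zeta>) =
              (if m = k then
                 of_real ((1 + (c 1)^2) * 2 ^ (2 * k) * (\<Prod>j=1..k+1. d (j+1))
                          / (l (k+2) * (\<Prod>j=1..k+1. 1 + (c j)^2)))
               else 0)"
    using S.ip_Phi S.N_formula unfolding S.ip_def S.Nf_def by simp
  show ?thesis using 1 2 3 S.part2 by blast
qed

end
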